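(* Let $(X,d)$ be a totally bounded metric space with II-modulus of total boundedness $\gamma$, $\emptyset\ne F\subseteq X$ with a representation $(\tilde F_k)$, and let $G,H:\mathbb{R}_+\to\mathbb{R}_+$ have a $G$-modulus $\alpha_G$ and an $H$-modulus $\beta_H$. Let $(x_n)$ in $X$ be uniformly $(G,H)$-Fej\'er monotone w.r.t. $F$ with modulus $\chi$ and have approximate $F$-points with approximate $F$-point bound $\Phi$. Suppose $F$ is uniformly closed with moduli $\delta_F,\omega_F$. Then for all $k\in\mathbb{N}$ and $g:\mathbb{N}\to\mathbb{N}$ there exists $N\le\tilde\Psi$ such that for all $i,j\in[N,N+g(N)]$: $d(x_i,x_j)\le\frac1{k+1}$ and $x_i\in AF_k$. Here $k_0:=\max\{k,\lceil(\omega_F(k)-1)/2\rceil\}$, $\chi_{k,\delta_F}(n,m,r):=\max\{\delta_F(k),\chi(n,m,r)\}$, $c(n,r):=\max\{\chi_{k,\delta_F}(i,g(i),r)\mid i\le n\}$, $\Psi_0(0):=0$, $\Psi_0(n+1):=\Phi\big(c(\Psi_0(n),2\beta_H(2k_0+1)+1)\big)$, and $\tilde\Psi:=\Psi_0\big(\gamma(\alpha_G(2\beta_H(2k_0+1)+1))\big)$.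
   Context: II-modulus of total boundedness $\gamma$: for every $k$ and every sequence $(y_n)$ in $X$ there are $0\le i<j\le\gamma(k)$ with $d(y_i,y_j)\le\frac1{k+1}$. Representation: $F=\bigcap_k\tilde F_k$, $AF_k:=\bigcap_{l\le k}\tilde F_l$. $G$-modulus $\alpha_G$: $a\le\frac1{\alpha_G(k)+1}\Rightarrow G(a)\le\frac1{k+1}$ for all $k\in\mathbb{N}$, $a\in\mathbb{R}_+$. $H$-modulus $\beta_H$: $H(a)\le\frac1{\beta_H(k)+1}\Rightarrow a\le\frac1{k+1}$. Uniformly $(G,H)$-Fej\'er monotone with modulus $\chi:\mathbb{N}^3\to\mathbb{N}$: for all $r,n,m$, all $p\in AF_{\chi(n,m,r)}$ and all $l\le m$, $H(d(x_{n+l},p))<G(d(x_n,p))+\frac1{r+1}$. Approximate $F$-point bound: a nondecreasing $\Phi:\mathbb{N}\to\mathbb{N}$ with: for all $k$ there is $N\le\Phi(k)$ with $x_N\in AF_k$. $F$ is uniformly closed with moduli $\delta_F,\omega_F:\mathbb{N}\to\mathbb{N}$ if for all $k\in\mathbb{N}$ and $p,q\in X$: $q\in AF_{\delta_F(k)}$ and $d(p,q)\le\frac1{\omega_F(k)+1}$ imply $p\in AF_k$. *)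

theory Defs
  imports "HOL-Analysis.Analysis"
begin

text \<open>The metric space (X,d) is the whole carrier of a type of class metric_space, d = dist.\<close>

definition II_modulus_tb :: "('a::metric_space) itself \<Rightarrow> (nat \<Rightarrow> nat) \<Rightarrow> bool" where
  "II_modulus_tb _ \<gamma> \<longleftrightarrow>
     (\<forall>k. \<forall>y::nat \<Rightarrow> 'a. \<exists>i j. i < j \<and> j \<le> \<gamma> k \<and> dist (y i) (y j) \<le> 1 / (real k + 1))"

definition AF :: "(nat \<Rightarrow> 'a set) \<Rightarrow> nat \<Rightarrow> 'a set" where
  "AF Ft k = (\<Inter>l\<in>{..k}. Ft l)"

definition G_modulus :: "(real \<Rightarrow> real) \<Rightarrow> (nat \<Rightarrow> nat) \<Rightarrow> bool" where
  "G_modulus G \<alpha> \<longleftrightarrow>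
     (\<forall>k. \<forall>a::real. 0 \<le> a \<longrightarrow> a \<le> 1 / (real (\<alpha> k) + 1) \<longrightarrow> G a \<le> 1 / (real k + 1))"

definition H_modulus :: "(real \<Rightarrow> real) \<Rightarrow> (nat \<Rightarrow> nat) \<Rightarrow> bool" where
  "H_modulus H \<beta> \<longleftrightarrow>
     (\<forall>k. \<forall>a::real. 0 \<le> a \<longrightarrow> H a \<le> 1 / (real (\<beta> k) + 1) \<longrightarrow> a \<le> 1 / (real k + 1))"

definition unif_GH_fejer ::
  "(real \<Rightarrow> real) \<Rightarrow> (real \<Rightarrow> real) \<Rightarrow> (nat \<Rightarrow> 'a::metric_space set) \<Rightarrow> (nat \<Rightarrow> 'a)
     \<Rightarrow> (nat \<Rightarrow> nat \<Rightarrow> nat \<Rightarrow> nat) \<Rightarrow> bool" where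
  "unif_GH_fejer G H Ft x chi \<longleftrightarrow>
     (\<forall>r n m. \<forall>p \<in> AF Ft (chi n m r). \<forall>l\<le>m.
        H (dist (x (n + l)) p) < G (dist (x n) p) + 1 / (real r + 1))"

definition approx_F_point_bound :: "(nat \<Rightarrow> 'a set) \<Rightarrow> (nat \<Rightarrow> 'a) \<Rightarrow> (nat \<Rightarrow> nat) \<Rightarrow> bool" where
  "approx_F_point_bound Ft x \<Phi> \<longleftrightarrow> mono \<Phi> \<and> (\<forall>k. \<exists>N\<le>\<Phi> k. x N \<in> AF Ft k)"

definition uniformly_closed :: "(nat \<Rightarrow> 'a::metric_space set) \<Rightarrow> (nat \<Rightarrow> nat) \<Rightarrow> (nat \<Rightarrow> nat) \<Rightarrow> bool" where
  "uniformly_closed Ft \<delta> \<omega> \<longleftrightarrow>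
     (\<forall>k p q. q \<in> AF Ft (\<delta> k) \<longrightarrow> dist p q \<le> 1 / (real (\<omega> k) + 1) \<longrightarrow> p \<in> AF Ft k)"

definition k0 :: "nat \<Rightarrow> (nat \<Rightarrow> nat) \<Rightarrow> nat" where
  "k0 k \<omega> = max k (nat \<lceil>(real (\<omega> k) - 1) / 2\<rceil>)"

definition chi_kdelta :: "(nat \<Rightarrow> nat \<Rightarrow> nat \<Rightarrow> nat) \<Rightarrow> nat \<Rightarrow> (nat \<Rightarrow> nat) \<Rightarrow> nat \<Rightarrow> nat \<Rightarrow> nat \<Rightarrow> nat" where
  "chi_kdelta chi k \<delta> n m r = max (\<delta> k) (chi n m r)"

definition c_fun :: "(nat \<Rightarrow> nat \<Rightarrow> nat \<Rightarrow> nat) \<Rightarrow> nat \<Rightarrow> (nat \<Rightarrow> nat) \<Rightarrow> (nat \<Rightarrow> nat) \<Rightarrow> nat \<Rightarrow> nat \<Rightarrow> nat" where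
  "c_fun chi k \<delta> g n r = Max {chi_kdelta chi k \<delta> i (g i) r | i. i \<le> n}"

primrec Psi0 :: "(nat \<Rightarrow> nat) \<Rightarrow> (nat \<Rightarrow> nat \<Rightarrow> nat) \<Rightarrow> nat \<Rightarrow> nat \<Rightarrow> nat" where
  "Psi0 \<Phi> c r 0 = 0"
| "Psi0 \<Phi> c r (Suc n) = \<Phi> (c (Psi0 \<Phi> c r n) r)"

definition Psi_tilde ::
  "nat \<Rightarrow> (nat \<Rightarrow> nat) \<Rightarrow> (nat \<Rightarrow> nat) \<Rightarrow> (nat \<Rightarrow> nat) \<Rightarrow> (nat \<Rightarrow> nat) \<Rightarrow> (nat \<Rightarrow> nat)
     \<Rightarrow> (nat \<Rightarrow> nat \<Rightarrow> nat \<Rightarrow> nat) \<Rightarrow> (nat \<Rightarrow> nat) \<Rightarrow> (nat \<Rightarrow> nat) \<Rightarrow> nat" where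
  "Psi_tilde k g \<gamma> \<alpha> \<beta> \<Phi> chi \<delta> \<omega> =
     (let r = 2 * \<beta> (2 * k0 k \<omega> + 1) + 1
      in Psi0 \<Phi> (c_fun chi k \<delta> g) r (\<gamma> (\<alpha> r)))"

end

theory Submission
  imports Defs
begin

lemma c_set_eq: "{chi_kdelta chi k \<delta> i (g i) r | i. i \<le> n} = (\<lambda>i. chi_kdelta chi k \<delta> i (g i) r) ` {..n}"
  by auto

lemma c_ge: "i \<le> n \<Longrightarrow> chi_kdelta chi k \<delta> i (g i) r \<le> c_fun chi k \<delta> g n r"
  unfolding c_fun_def c_set_eq by (rule Max_ge) auto

lemma c_mono: "n \<le> m \<Longrightarrow> c_fun chi k \<delta> g n r \<le> c_fun chi k \<delta> g m r"
  unfolding c_fun_def c_set_eq by (rule Max_mono) auto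

lemma AF_anti: "L \<le> K \<Longrightarrow> AF Ft K \<subseteq> AF Ft L"
  unfolding AF_def by auto

lemma Psi0_Suc_mono:
  assumes "mono \<Phi>"
  shows "Psi0 \<Phi> (c_fun chi k \<delta> g) r n \<le> Psi0 \<Phi> (c_fun chi k \<delta> g) r (Suc n)"
proof (induction n)
  case 0 then show ?case by simp
next
  case (Suc n)
  have "\<Phi> (c_fun chi k \<delta> g (Psi0 \<Phi> (c_fun chi k \<delta> g) r n) r)
      \<le> \<Phi> (c_fun chi k \<delta> g (Psi0 \<Phi> (c_fun chi k \<delta> g) r (Suc n)) r)"
    by (rule monoD[OF assms c_mono[OF Suc.IH]])
  then show ?case by simp
qed

lemma Psi0_mono:
  assumes "mono \<Phi>" "n \<le> m"
  shows "Psi0 \<Phi> (c_fun chi k \<delta> g) r n \<le> Psi0 \<Phi> (c_fun chi k \<delta> g) r m"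
  using assms(2)
proof (induction m)
  case 0 then show ?case by simp
next
  case (Suc m)
  show ?case
  proof (cases "n = Suc m")
    case True then show ?thesis by simp
  next
    case False
    with Suc.prems have "n \<le> m" by simp
    with Suc.IH have "Psi0 \<Phi> (c_fun chi k \<delta> g) r n \<le> Psi0 \<Phi> (c_fun chi k \<delta> g) r m" by simp
    also have "\<dots> \<le> Psi0 \<Phi> (c_fun chi k \<delta> g) r (Suc m)" by (rule Psi0_Suc_mono[OF assms(1)])
    finally show ?thesis .
  qed
qed

theorem theorem5p3:
  fixes x :: "nat \<Rightarrow> 'a::metric_space"
    and F :: "'a set" and Ft :: "nat \<Rightarrow> 'a set"
    and G H :: "real \<Rightarrow> real"
    and \<gamma> \<alpha> \<beta> \<Phi> \<delta> \<omega> :: "nat \<Rightarrow> nat"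
    and chi :: "nat \<Rightarrow> nat \<Rightarrow> nat \<Rightarrow> nat"
  assumes tb: "II_modulus_tb TYPE('a) \<gamma>"
    and F_ne: "F \<noteq> {}"
    and F_rep: "F = (\<Inter>k. Ft k)"
    and G_nonneg: "\<forall>a\<ge>0. G a \<ge> 0"
    and H_nonneg: "\<forall>a\<ge>0. H a \<ge> 0"
    and G_mod: "G_modulus G \<alpha>"
    and H_mod: "H_modulus H \<beta>"
    and fejer: "unif_GH_fejer G H Ft x chi"
    and approx: "approx_F_point_bound Ft x \<Phi>"
    and uclosed: "uniformly_closed Ft \<delta> \<omega>"
  shows "\<forall>k (g :: nat \<Rightarrow> nat). \<exists>N \<le> Psi_tilde k g \<gamma> \<alpha> \<beta> \<Phi> chi \<delta> \<omega>.
           \<forall>i j. N \<le> i \<and> i \<le> N + g N \<and> N \<le> j \<and> j \<le> N + g N \<longrightarrow>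
             dist (x i) (x j) \<le> 1 / (real k + 1) \<and> x i \<in> AF Ft k"
proof (intro allI)
  fix k and g :: "nat \<Rightarrow> nat"
  define r where "r = 2 * \<beta> (2 * k0 k \<omega> + 1) + 1"
  define P where "P = Psi0 \<Phi> (c_fun chi k \<delta> g) r"
  define K where "K n = c_fun chi k \<delta> g (P n) r" for n
  have monoPhi: "mono \<Phi>" and ex: "\<And>K. \<exists>N\<le>\<Phi> K. x N \<in> AF Ft K"
    using approx unfolding approx_F_point_bound_def by auto
  define M where "M n = (SOME N. N \<le> \<Phi> (K n) \<and> x N \<in> AF Ft (K n))" for n
  have M: "M n \<le> \<Phi> (K n) \<and> x (M n) \<in> AF Ft (K n)" for n
    unfolding M_def by (rule someI_ex) (use ex in blast)
  define Ns where "Ns n = (case n of 0 \<Rightarrow> 0 | Suc m \<Rightarrow> M m)" for n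
  have Ns_le: "Ns n \<le> P n" for n
    using M by (cases n) (auto simp: Ns_def P_def K_def)
  have Pmono: "n \<le> m \<Longrightarrow> P n \<le> P m" for n m
    unfolding P_def using Psi0_mono[OF monoPhi] by blast
  obtain i j where ij: "i < j" "j \<le> \<gamma> (\<alpha> r)"
    and dij: "dist (x (Ns i)) (x (Ns j)) \<le> 1 / (real (\<alpha> r) + 1)"
  proof -
    have tb': "\<forall>k. \<forall>y::nat \<Rightarrow> 'a. \<exists>i j. i < j \<and> j \<le> \<gamma> k \<and> dist (y i) (y j) \<le> 1 / (real k + 1)"
      using tb unfolding II_modulus_tb_def .
    have "\<exists>i j. i < j \<and> j \<le> \<gamma> (\<alpha> r) \<and> dist (x (Ns i)) (x (Ns j)) \<le> 1 / (real (\<alpha> r) + 1)"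
      using spec[OF spec[OF tb', of "\<alpha> r"], of "\<lambda>n. x (Ns n)"] by simp
    thus ?thesis using that by blast
  qed
  define p where "p = x (Ns j)"
  obtain j' where j': "j = Suc j'" using ij by (cases j) auto
  have pK: "p \<in> AF Ft (K j')" using M j' by (simp add: p_def Ns_def)
  have "Ns i \<le> P j'" using Ns_le[of i] Pmono[of i j'] ij j' by simp
  hence "c_fun chi k \<delta> g (Ns i) r \<le> K j'" unfolding K_def by (rule c_mono)
  moreover have "chi_kdelta chi k \<delta> (Ns i) (g (Ns i)) r \<le> c_fun chi k \<delta> g (Ns i) r"
    by (rule c_ge) simp
  ultimately have "chi_kdelta chi k \<delta> (Ns i) (g (Ns i)) r \<le> K j'" by linarith
  hence le1: "chi (Ns i) (g (Ns i)) r \<le> K j'" and le2: "\<delta> k \<le> K j'"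
    unfolding chi_kdelta_def by simp_all
  have pchi: "p \<in> AF Ft (chi (Ns i) (g (Ns i)) r)" using subsetD[OF AF_anti[OF le1] pK] .
  have pdel: "p \<in> AF Ft (\<delta> k)" using subsetD[OF AF_anti[OF le2] pK] .
  have Gle: "G (dist (x (Ns i)) p) \<le> 1 / (real r + 1)"
    using G_mod[unfolded G_modulus_def, rule_format, of "dist (x (Ns i)) p" "r"] dij
    unfolding p_def by simp
  have close: "dist (x (Ns i + l)) p \<le> 1 / (real (2 * k0 k \<omega> + 1) + 1)" if "l \<le> g (Ns i)" for l
  proof -
    have "H (dist (x (Ns i + l)) p) < G (dist (x (Ns i)) p) + 1 / (real r + 1)"
      using fejer[unfolded unif_GH_fejer_def, rule_format, OF pchi that] .
    also have "\<dots> \<le> 2 / (real r + 1)" using Gle by simp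
    also have "\<dots> = 1 / (real (\<beta> (2 * k0 k \<omega> + 1)) + 1)"
      unfolding r_def by (simp add: field_simps)
    finally have "H (dist (x (Ns i + l)) p) \<le> 1 / (real (\<beta> (2 * k0 k \<omega> + 1)) + 1)" by simp
    thus ?thesis using H_mod[unfolded H_modulus_def, rule_format, of "dist (x (Ns i + l)) p" "2 * k0 k \<omega> + 1"]
      by simp
  qed
  have k0k: "k \<le> k0 k \<omega>" unfolding k0_def by simp
  have k0w: "real (\<omega> k) + 1 \<le> real (2 * k0 k \<omega> + 1) + 1"
  proof -
    have "(real (\<omega> k) - 1) / 2 \<le> real (nat \<lceil>(real (\<omega> k) - 1) / 2\<rceil>)"
      by linarith
    moreover have "nat \<lceil>(real (\<omega> k) - 1) / 2\<rceil> \<le> k0 k \<omega>" unfolding k0_def by simp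
    ultimately show ?thesis by simp
  qed
  show "\<exists>N \<le> Psi_tilde k g \<gamma> \<alpha> \<beta> \<Phi> chi \<delta> \<omega>.
           \<forall>i j. N \<le> i \<and> i \<le> N + g N \<and> N \<le> j \<and> j \<le> N + g N \<longrightarrow>
             dist (x i) (x j) \<le> 1 / (real k + 1) \<and> x i \<in> AF Ft k"
  proof (intro exI[of _ "Ns i"] conjI allI impI)
    have "Ns i \<le> P (\<gamma> (\<alpha> r))" using Ns_le[of i] Pmono[of i "\<gamma> (\<alpha> r)"] ij by simp
    thus "Ns i \<le> Psi_tilde k g \<gamma> \<alpha> \<beta> \<Phi> chi \<delta> \<omega>"
      unfolding Psi_tilde_def P_def r_def Let_def by simp
  next
    fix a b assume ab: "Ns i \<le> a \<and> a \<le> Ns i + g (Ns i) \<and> Ns i \<le> b \<and> b \<le> Ns i + g (Ns i)"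
    have da: "dist (x a) p \<le> 1 / (real (2 * k0 k \<omega> + 1) + 1)"
    proof -
      have h1: "a - Ns i \<le> g (Ns i)" using ab by linarith
      have h2: "Ns i + (a - Ns i) = a" using ab by linarith
      show ?thesis using close[OF h1] unfolding h2 .
    qed
    have db: "dist (x b) p \<le> 1 / (real (2 * k0 k \<omega> + 1) + 1)"
    proof -
      have h1: "b - Ns i \<le> g (Ns i)" using ab by linarith
      have h2: "Ns i + (b - Ns i) = b" using ab by linarith
      show ?thesis using close[OF h1] unfolding h2 .
    qed
    have "dist (x a) (x b) \<le> dist (x a) p + dist (x b) p" by (rule dist_triangle2)
    also have "\<dots> \<le> 2 / (real (2 * k0 k \<omega> + 1) + 1)" using da db by simp
    also have "\<dots> = 1 / (real (k0 k \<omega>) + 1)" by (simp add: field_simps)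
    also have "\<dots> \<le> 1 / (real k + 1)" using k0k by (intro divide_left_mono) auto
    finally show "dist (x a) (x b) \<le> 1 / (real k + 1)" .
    have "dist (x a) p \<le> 1 / (real (\<omega> k) + 1)"
    proof -
      have "1 / (real (2 * k0 k \<omega> + 1) + 1) \<le> 1 / (real (\<omega> k) + 1)"
        using k0w by (intro divide_left_mono) auto
      thus ?thesis using da by linarith
    qed
    thus "x a \<in> AF Ft k" using uclosed pdel unfolding uniformly_closed_def by blast
  qed
qed

end
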